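(* Let $\mathbf q=(q_1,\dots,q_R)$ be route flows, $\mathbf t=(t_1,\dots,t_R)$ route travel times, and let $\mu$ be an assignment plan inducing an offer profile $T^{CAV}$ subject to $(\mathbf q,\mathbf t)$. Then there exist measurable weights $\alpha^{r_1r_2}:I\to[0,1]$, $(r_1,r_2)\in\{1,\dots,R\}^2$, with $\sum_{r_1,r_2}\alpha^{r_1r_2}(i)=1$, and measurable vectors $\mu^R(i,r_1,r_2,\cdot)\in\Delta^{R-1}$, each having at most two positive coordinates, such that for a.e. $i$: $\sum_rt_r\mu^R(i,r_1,r_2,r)=T^{CAV}_i$ whenever $\alpha^{r_1r_2}(i)>0$, and $\sum_{r_1,r_2}\alpha^{r_1r_2}(i)\mu^R(i,r_1,r_2,r)=\mu(i,r)$ for every $r$. Equivalently, on the augmented driver space $\tilde I=I\times\{1,\dots,R\}^2$ with measure $\tilde{di}(A)=\int_I\sum_{r_1,r_2}\alpha^{r_1r_2}(i)\mathbf 1_{(i,r_1,r_2)\in A}\,di$ (which splits each driver into finitely many parts), $\mu^R$ is an assignment plan whose induced distribution on $\Delta^{R-1}$ is supported on vectors with at most two nonzero coordinates, which induces the same travel time distribution as $\mu$, and from which $\mu$ is recovered by recombining the parts of each driver. (Such a plan is in general not unique.)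
   Context: Drivers form a measure space $(I,di)$ of total mass $q=\sum_rq_r$. $\Delta^{R-1}=\{(x_1,\dots,x_R):x_r\ge0,\sum_rx_r=1\}$. An offer profile subject to $(\mathbf q,\mathbf t)$ is a measurable $T^{CAV}:I\to[\min_rt_r,\max_rt_r]$ with $\frac1{|I|}\int_IT^{CAV}_i\,di=\frac1q\sum_rq_rt_r$. An assignment plan inducing $T^{CAV}$ is a measurable $\mu:I\times\{1,\dots,R\}\to[0,1]$ with $\int_I\mu(i,r)\,di=q_r$ for every $r$, $\sum_r\mu(i,r)=1$ and $\sum_rt_r\mu(i,r)=T^{CAV}_i$ for a.e. $i$. The travel time distribution induced by a plan is the push-forward of the driver measure under $i\mapsto\sum_rt_r\mu(i,r)$. *)

theory Defs
  imports "HOL-Analysis.Analysis"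
begin

text \<open>Routes are indexed by 1..R. Vectors over routes are functions nat => real,
  only the values on 1..R matter.\<close>

definition route_simplex :: "nat \<Rightarrow> (nat \<Rightarrow> real) set" where
  "route_simplex R = {x. (\<forall>r\<in>{1..R}. 0 \<le> x r) \<and> (\<Sum>r=1..R. x r) = 1}"

definition offer_profile ::
  "'a measure \<Rightarrow> nat \<Rightarrow> (nat \<Rightarrow> real) \<Rightarrow> (nat \<Rightarrow> real) \<Rightarrow> ('a \<Rightarrow> real) \<Rightarrow> bool" where
  "offer_profile M R q t T \<longleftrightarrow>
     T \<in> borel_measurable M \<and>
     (\<forall>i\<in>space M. T i \<in> {Min (t ` {1..R}) .. Max (t ` {1..R})}) \<and>
     (1 / measure M (space M)) * (\<integral>i. T i \<partial>M)
        = (1 / (\<Sum>r=1..R. q r)) * (\<Sum>r=1..R. q r * t r)"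

definition assignment_plan ::
  "'a measure \<Rightarrow> nat \<Rightarrow> (nat \<Rightarrow> real) \<Rightarrow> (nat \<Rightarrow> real) \<Rightarrow> ('a \<Rightarrow> real)
     \<Rightarrow> ('a \<Rightarrow> nat \<Rightarrow> real) \<Rightarrow> bool" where
  "assignment_plan M R q t T \<mu> \<longleftrightarrow>
     (\<forall>r\<in>{1..R}. (\<lambda>i. \<mu> i r) \<in> borel_measurable M \<and>
                  (\<forall>i\<in>space M. \<mu> i r \<in> {0..1}) \<and>
                  (\<integral>i. \<mu> i r \<partial>M) = q r) \<and>
     (AE i in M. (\<Sum>r=1..R. \<mu> i r) = 1 \<and> (\<Sum>r=1..R. t r * \<mu> i r) = T i)"

end

theory Submission
  imports Defs
begin

definition Dd :: "nat set \<Rightarrow> (nat \<Rightarrow> real) \<Rightarrow> (nat \<Rightarrow> real) \<Rightarrow> real \<Rightarrow> real" where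
  "Dd S x t \<tau> = (\<Sum>r\<in>S. if \<tau> < t r then x r * (t r - \<tau>) else 0)"

definition aa :: "nat set \<Rightarrow> (nat \<Rightarrow> real) \<Rightarrow> (nat \<Rightarrow> real) \<Rightarrow> real \<Rightarrow> nat \<Rightarrow> nat \<Rightarrow> real" where
  "aa S x t \<tau> r1 r2 = (if t r1 < \<tau> \<and> \<tau> < t r2 then x r1 * x r2 * (t r2 - t r1) / Dd S x t \<tau>
     else if r1 = r2 \<and> t r1 = \<tau> then x r1 else 0)"

definition mm :: "(nat \<Rightarrow> real) \<Rightarrow> real \<Rightarrow> nat \<Rightarrow> nat \<Rightarrow> nat \<Rightarrow> real" where
  "mm t \<tau> r1 r2 r = (if t r1 < \<tau> \<and> \<tau> < t r2 then
      (if r = r1 then (t r2 - \<tau>) / (t r2 - t r1) else if r = r2 then (\<tau> - t r1) / (t r2 - t r1) else 0)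
     else (if r = r1 then 1 else 0))"

lemma mm_sum:
  assumes "finite S" "r1 \<in> S" "r2 \<in> S"
  shows "(\<Sum>r\<in>S. mm t \<tau> r1 r2 r) = 1"
proof (cases "t r1 < \<tau> \<and> \<tau> < t r2")
  case True
  then have ne: "r1 \<noteq> r2" "t r2 - t r1 \<noteq> 0" by auto
  have "(\<Sum>r\<in>S. mm t \<tau> r1 r2 r) = (\<Sum>r\<in>S. (if r = r1 then (t r2 - \<tau>) / (t r2 - t r1) else 0)
         + (if r = r2 then (\<tau> - t r1) / (t r2 - t r1) else 0))"
    using True ne by (intro sum.cong) (auto simp: mm_def)
  also have "\<dots> = (t r2 - \<tau>) / (t r2 - t r1) + (\<tau> - t r1) / (t r2 - t r1)"
    using assms by (simp add: sum.distrib)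
  also have "\<dots> = ((t r2 - \<tau>) + (\<tau> - t r1)) / (t r2 - t r1)" by (simp only: add_divide_distrib)
  also have "\<dots> = 1" using ne by simp
  finally show ?thesis .
next
  case False
  then have "(\<Sum>r\<in>S. mm t \<tau> r1 r2 r) = (\<Sum>r\<in>S. if r = r1 then 1 else 0)"
    by (intro sum.cong) (auto simp: mm_def)
  then show ?thesis using assms by simp
qed

lemma mm_nonneg: "0 \<le> mm t \<tau> r1 r2 r"
  by (auto simp: mm_def)

lemma mm_card:
  assumes "finite S"
  shows "card {r\<in>S. mm t \<tau> r1 r2 r > 0} \<le> 2"
proof -
  have "{r\<in>S. mm t \<tau> r1 r2 r > 0} \<subseteq> {r1, r2}" by (auto simp: mm_def split: if_splits)
  then have "card {r\<in>S. mm t \<tau> r1 r2 r > 0} \<le> card {r1, r2}" by (intro card_mono) auto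
  also have "\<dots> \<le> 2" by (simp add: card_insert_if)
  finally show ?thesis .
qed

lemma mm_time:
  assumes "finite S" "r1 \<in> S" "r2 \<in> S" "aa S x t \<tau> r1 r2 > 0"
  shows "(\<Sum>r\<in>S. t r * mm t \<tau> r1 r2 r) = \<tau>"
proof (cases "t r1 < \<tau> \<and> \<tau> < t r2")
  case True
  then have ne: "r1 \<noteq> r2" "t r2 - t r1 \<noteq> 0" by auto
  have "(\<Sum>r\<in>S. t r * mm t \<tau> r1 r2 r) = (\<Sum>r\<in>S. (if r = r1 then t r1 * ((t r2 - \<tau>) / (t r2 - t r1)) else 0)
         + (if r = r2 then t r2 * ((\<tau> - t r1) / (t r2 - t r1)) else 0))"
    using True ne by (intro sum.cong) (auto simp: mm_def)
  also have "\<dots> = t r1 * ((t r2 - \<tau>) / (t r2 - t r1)) + t r2 * ((\<tau> - t r1) / (t r2 - t r1))"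
    using assms by (simp add: sum.distrib)
  also have "\<dots> = (t r1 * (t r2 - \<tau>) + t r2 * (\<tau> - t r1)) / (t r2 - t r1)" by (simp only: add_divide_distrib times_divide_eq_right)
  also have "\<dots> = (\<tau> * (t r2 - t r1)) / (t r2 - t r1)" by (simp add: algebra_simps)
  also have "\<dots> = \<tau>" using ne by simp
  finally show ?thesis .
next
  case False
  with assms(4) have "r1 = r2" "t r1 = \<tau>" by (auto simp: aa_def split: if_splits)
  then show ?thesis using assms False by (simp add: mm_def if_distrib cong: if_cong)
qed

lemma recomb:
  assumes fin: "finite S" and nn: "\<forall>r\<in>S. 0 \<le> x r" and s1: "(\<Sum>r\<in>S. x r) = 1"
    and st: "(\<Sum>r\<in>S. t r * x r) = \<tau>" and rS: "r \<in> S"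
  shows "(\<Sum>r1\<in>S. \<Sum>r2\<in>S. aa S x t \<tau> r1 r2 * mm t \<tau> r1 r2 r) = x r"
proof -
  define D where "D = Dd S x t \<tau>"
  define D' where "D' = (\<Sum>r\<in>S. if t r < \<tau> then x r * (\<tau> - t r) else 0)"
  have "(\<Sum>r\<in>S. x r * (t r - \<tau>)) = 0"
    using s1 st by (simp add: algebra_simps sum_subtractf sum_distrib_left[symmetric] mult.commute)
  moreover have "(\<Sum>r\<in>S. x r * (t r - \<tau>)) = D - D'"
    unfolding D_def D'_def Dd_def sum_subtractf[symmetric] by (intro sum.cong) (auto simp: algebra_simps)
  ultimately have DD: "D' = D" by simp
  have Dnn: "0 \<le> D" unfolding D_def Dd_def using nn by (intro sum_nonneg) auto
  have ptw: "aa S x t \<tau> r1 r2 * mm t \<tau> r1 r2 r =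
      (if t r1 < \<tau> \<and> \<tau> < t r2 \<and> r = r1 then x r1 * (x r2 * (t r2 - \<tau>)) / D else 0)
    + (if t r1 < \<tau> \<and> \<tau> < t r2 \<and> r = r2 then x r2 * (x r1 * (\<tau> - t r1)) / D else 0)
    + (if r1 = r2 \<and> t r1 = \<tau> \<and> r = r1 then x r1 else 0)" for r1 r2
    by (cases "D = 0") (auto simp: aa_def mm_def D_def field_simps)
  have sA: "(\<Sum>r1\<in>S. \<Sum>r2\<in>S. (if t r1 < \<tau> \<and> \<tau> < t r2 \<and> r = r1 then x r1 * (x r2 * (t r2 - \<tau>)) / D else 0))
      = (if t r < \<tau> then x r * D / D else 0)"
  proof -
    have "(\<Sum>r1\<in>S. \<Sum>r2\<in>S. (if t r1 < \<tau> \<and> \<tau> < t r2 \<and> r = r1 then x r1 * (x r2 * (t r2 - \<tau>)) / D else 0))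
       = (\<Sum>r1\<in>S. if r = r1 then (if t r1 < \<tau> then x r1 * (\<Sum>r2\<in>S. if \<tau> < t r2 then x r2 * (t r2 - \<tau>) else 0) / D else 0) else 0)"
      by (intro sum.cong) (auto simp: sum_distrib_left sum_divide_distrib intro!: sum.cong)
    also have "\<dots> = (if t r < \<tau> then x r * D / D else 0)"
      using fin rS by (simp add: D_def Dd_def)
    finally show ?thesis .
  qed
  have sB: "(\<Sum>r1\<in>S. \<Sum>r2\<in>S. (if t r1 < \<tau> \<and> \<tau> < t r2 \<and> r = r2 then x r2 * (x r1 * (\<tau> - t r1)) / D else 0))
      = (if \<tau> < t r then x r * D' / D else 0)"
  proof -
    have "(\<Sum>r1\<in>S. \<Sum>r2\<in>S. (if t r1 < \<tau> \<and> \<tau> < t r2 \<and> r = r2 then x r2 * (x r1 * (\<tau> - t r1)) / D else 0))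
       = (\<Sum>r2\<in>S. \<Sum>r1\<in>S. (if t r1 < \<tau> \<and> \<tau> < t r2 \<and> r = r2 then x r2 * (x r1 * (\<tau> - t r1)) / D else 0))"
      by (rule sum.swap)
    also have "\<dots> = (\<Sum>r2\<in>S. if r = r2 then (if \<tau> < t r2 then x r2 * (\<Sum>r1\<in>S. if t r1 < \<tau> then x r1 * (\<tau> - t r1) else 0) / D else 0) else 0)"
      by (intro sum.cong) (auto simp: sum_distrib_left sum_divide_distrib intro!: sum.cong)
    also have "\<dots> = (if \<tau> < t r then x r * D' / D else 0)"
      using fin rS by (simp add: D'_def)
    finally show ?thesis .
  qed
  have sC: "(\<Sum>r1\<in>S. \<Sum>r2\<in>S. (if r1 = r2 \<and> t r1 = \<tau> \<and> r = r1 then x r1 else 0))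
      = (if t r = \<tau> then x r else 0)"
  proof -
    have "(\<Sum>r1\<in>S. \<Sum>r2\<in>S. (if r1 = r2 \<and> t r1 = \<tau> \<and> r = r1 then x r1 else 0))
        = (\<Sum>r1\<in>S. if r = r1 then (if t r1 = \<tau> then x r1 else 0) else 0)"
      using fin by (intro sum.cong) (auto simp: if_distrib cong: if_cong)
    also have "\<dots> = (if t r = \<tau> then x r else 0)" using fin rS by simp
    finally show ?thesis .
  qed
  have tot: "(\<Sum>r1\<in>S. \<Sum>r2\<in>S. aa S x t \<tau> r1 r2 * mm t \<tau> r1 r2 r)
     = (if t r < \<tau> then x r * D / D else 0) + (if \<tau> < t r then x r * D' / D else 0) + (if t r = \<tau> then x r else 0)"
    unfolding ptw sum.distrib sA sB sC ..
  show ?thesis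
  proof (cases "D = 0")
    case False
    then show ?thesis unfolding tot DD by auto
  next
    case True
    have "t r \<noteq> \<tau> \<Longrightarrow> x r = 0"
    proof -
      assume ne: "t r \<noteq> \<tau>"
      show "x r = 0"
      proof (cases "t r < \<tau>")
        case True
        have "(if t r < \<tau> then x r * (\<tau> - t r) else 0) \<le> D'"
          unfolding D'_def using nn fin rS by (intro member_le_sum) auto
        then have "x r * (\<tau> - t r) \<le> 0" using True DD \<open>D = 0\<close> by simp
        then show ?thesis using True nn rS by (metis diff_gt_0_iff_gt mult_le_0_iff order_antisym_conv not_le)
      next
        case False
        then have lt: "\<tau> < t r" using ne by auto
        have "(if \<tau> < t r then x r * (t r - \<tau>) else 0) \<le> D"
          unfolding D_def Dd_def using nn fin rS by (intro member_le_sum) auto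
        then have "x r * (t r - \<tau>) \<le> 0" using lt \<open>D = 0\<close> by simp
        then show ?thesis using lt nn rS by (metis diff_gt_0_iff_gt mult_le_0_iff order_antisym_conv not_le)
      qed
    qed
    then show ?thesis unfolding tot by auto
  qed
qed

lemma aa_nonneg:
  assumes "finite S" "\<forall>r\<in>S. 0 \<le> x r" "r1 \<in> S" "r2 \<in> S"
  shows "0 \<le> aa S x t \<tau> r1 r2"
proof -
  have "0 \<le> Dd S x t \<tau>" unfolding Dd_def using assms by (intro sum_nonneg) auto
  then show ?thesis using assms(2-4) by (auto simp: aa_def intro!: divide_nonneg_nonneg mult_nonneg_nonneg)
qed

lemma aa_sum:
  assumes fin: "finite S" and nn: "\<forall>r\<in>S. 0 \<le> x r" and s1: "(\<Sum>r\<in>S. x r) = 1"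
    and st: "(\<Sum>r\<in>S. t r * x r) = \<tau>"
  shows "(\<Sum>r1\<in>S. \<Sum>r2\<in>S. aa S x t \<tau> r1 r2) = 1"
proof -
  have "(\<Sum>r1\<in>S. \<Sum>r2\<in>S. aa S x t \<tau> r1 r2)
     = (\<Sum>r1\<in>S. \<Sum>r2\<in>S. aa S x t \<tau> r1 r2 * (\<Sum>r\<in>S. mm t \<tau> r1 r2 r))"
    using fin by (intro sum.cong) (auto simp: mm_sum)
  also have "\<dots> = (\<Sum>r1\<in>S. \<Sum>r\<in>S. \<Sum>r2\<in>S. aa S x t \<tau> r1 r2 * mm t \<tau> r1 r2 r)"
    unfolding sum_distrib_left by (rule sum.cong[OF refl], rule sum.swap)
  also have "\<dots> = (\<Sum>r\<in>S. \<Sum>r1\<in>S. \<Sum>r2\<in>S. aa S x t \<tau> r1 r2 * mm t \<tau> r1 r2 r)"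
    by (rule sum.swap)
  also have "\<dots> = (\<Sum>r\<in>S. x r)"
    using recomb[OF assms] by (intro sum.cong) auto
  finally show ?thesis using s1 by simp
qed

theorem proposition7:
  fixes M :: "'a measure" and R :: nat
    and q t :: "nat \<Rightarrow> real" and T :: "'a \<Rightarrow> real" and \<mu> :: "'a \<Rightarrow> nat \<Rightarrow> real"
  assumes "R \<ge> 1"
    and "\<forall>r\<in>{1..R}. 0 \<le> q r"
    and "emeasure M (space M) = ennreal (\<Sum>r=1..R. q r)"
    and "offer_profile M R q t T"
    and "assignment_plan M R q t T \<mu>"
  shows "\<exists>(\<alpha> :: 'a \<Rightarrow> nat \<Rightarrow> nat \<Rightarrow> real) (\<mu>R :: 'a \<Rightarrow> nat \<Rightarrow> nat \<Rightarrow> nat \<Rightarrow> real).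
     (\<forall>r1\<in>{1..R}. \<forall>r2\<in>{1..R}.
        (\<lambda>i. \<alpha> i r1 r2) \<in> borel_measurable M \<and>
        (\<forall>i\<in>space M. \<alpha> i r1 r2 \<in> {0..1}) \<and>
        (\<forall>r\<in>{1..R}. (\<lambda>i. \<mu>R i r1 r2 r) \<in> borel_measurable M) \<and>
        (\<forall>i\<in>space M. \<mu>R i r1 r2 \<in> route_simplex R \<and>
                      card {r\<in>{1..R}. \<mu>R i r1 r2 r > 0} \<le> 2)) \<and>
     (\<forall>i\<in>space M. (\<Sum>r1=1..R. \<Sum>r2=1..R. \<alpha> i r1 r2) = 1) \<and>
     (AE i in M.
        (\<forall>r1\<in>{1..R}. \<forall>r2\<in>{1..R}. \<alpha> i r1 r2 > 0 \<longrightarrow>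
             (\<Sum>r=1..R. t r * \<mu>R i r1 r2 r) = T i) \<and>
        (\<forall>r\<in>{1..R}. (\<Sum>r1=1..R. \<Sum>r2=1..R. \<alpha> i r1 r2 * \<mu>R i r1 r2 r) = \<mu> i r))"
proof -
  let ?S = "{1..R}"
  have fin: "finite ?S" by simp
  have one: "1 \<in> ?S" using assms(1) by simp
  from assms(5) have mu_meas: "\<And>r. r \<in> ?S \<Longrightarrow> (\<lambda>i. \<mu> i r) \<in> borel_measurable M"
    and mu_rng: "\<And>r i. r \<in> ?S \<Longrightarrow> i \<in> space M \<Longrightarrow> \<mu> i r \<in> {0..1}"
    and ae: "AE i in M. (\<Sum>r=1..R. \<mu> i r) = 1 \<and> (\<Sum>r=1..R. t r * \<mu> i r) = T i"
    unfolding assignment_plan_def by auto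
  from assms(4) have T_meas[measurable]: "T \<in> borel_measurable M" unfolding offer_profile_def by auto
  define good where "good i \<longleftrightarrow> (\<Sum>r=1..R. \<mu> i r) = 1 \<and> (\<Sum>r=1..R. t r * \<mu> i r) = T i" for i
  define \<alpha> where "\<alpha> i r1 r2 = (if good i then aa ?S (\<mu> i) t (T i) r1 r2 else (if r1 = 1 \<and> r2 = 1 then 1 else 0))" for i r1 r2
  define \<mu>R where "\<mu>R i r1 r2 r = mm t (T i) r1 r2 r" for i r1 r2 r
  have sum_meas: "(\<lambda>i. \<Sum>r\<in>?S. f i r) \<in> borel_measurable M"
    if "\<And>r. r \<in> ?S \<Longrightarrow> (\<lambda>i. f i r) \<in> borel_measurable M" for f :: "'a \<Rightarrow> nat \<Rightarrow> real"
    using that by (rule borel_measurable_sum)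
  have m1[measurable]: "(\<lambda>i. \<Sum>r\<in>?S. \<mu> i r) \<in> borel_measurable M"
    by (rule borel_measurable_sum) (rule mu_meas)
  have m2[measurable]: "(\<lambda>i. \<Sum>r\<in>?S. t r * \<mu> i r) \<in> borel_measurable M"
    by (rule borel_measurable_sum) (rule borel_measurable_times[OF borel_measurable_const mu_meas])
  have good_meas[measurable]: "Measurable.pred M good"
    unfolding good_def by measurable
  have nn: "\<And>i. i \<in> space M \<Longrightarrow> \<forall>r\<in>?S. 0 \<le> \<mu> i r" using mu_rng by auto
  have asum: "(\<Sum>r1=1..R. \<Sum>r2=1..R. \<alpha> i r1 r2) = 1" if i: "i \<in> space M" for i
  proof (cases "good i")
    case True
    then have s1: "(\<Sum>r\<in>?S. \<mu> i r) = 1" and st: "(\<Sum>r\<in>?S. t r * \<mu> i r) = T i"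
      unfolding good_def by auto
    show ?thesis unfolding \<alpha>_def using aa_sum[OF fin nn[OF i] s1 st] True by simp
  next
    case False
    have "(\<Sum>r1\<in>?S. \<Sum>r2\<in>?S. (if r1 = 1 \<and> r2 = 1 then 1 else 0::real))
        = (\<Sum>r1\<in>?S. if r1 = 1 then 1 else 0)"
    proof (rule sum.cong[OF refl])
      fix r1 assume "r1 \<in> ?S"
      show "(\<Sum>r2\<in>?S. (if r1 = 1 \<and> r2 = 1 then 1 else 0::real)) = (if r1 = 1 then 1 else 0)"
        using one by (cases "r1 = 1") simp_all
    qed
    also have "\<dots> = 1" using one by simp
    finally show ?thesis unfolding \<alpha>_def using False by simp
  qed
  have anonneg: "0 \<le> \<alpha> i r1 r2" if i: "i \<in> space M" and r: "r1 \<in> ?S" "r2 \<in> ?S" for i r1 r2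
    unfolding \<alpha>_def using aa_nonneg[OF fin nn[OF i] r] by auto
  have arng: "\<alpha> i r1 r2 \<in> {0..1}" if i: "i \<in> space M" and r: "r1 \<in> ?S" "r2 \<in> ?S" for i r1 r2
  proof -
    have "\<alpha> i r1 r2 \<le> (\<Sum>r2'\<in>?S. \<alpha> i r1 r2')"
      using r anonneg[OF i] by (intro member_le_sum) auto
    also have "\<dots> \<le> (\<Sum>r1'\<in>?S. \<Sum>r2'\<in>?S. \<alpha> i r1' r2')"
      using r anonneg[OF i] by (intro member_le_sum[where f = "\<lambda>r1'. \<Sum>r2'\<in>?S. \<alpha> i r1' r2'"] sum_nonneg) auto
    also have "\<dots> = 1" using asum[OF i] by simp
    finally show ?thesis using anonneg[OF i r] by simp
  qed
  have ameas: "(\<lambda>i. \<alpha> i r1 r2) \<in> borel_measurable M" if r: "r1 \<in> ?S" "r2 \<in> ?S" for r1 r2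
  proof -
    have [measurable]: "(\<lambda>i. \<mu> i r1) \<in> borel_measurable M" "(\<lambda>i. \<mu> i r2) \<in> borel_measurable M"
      using mu_meas r by auto
    have [measurable]: "(\<lambda>i. Dd ?S (\<mu> i) t (T i)) \<in> borel_measurable M"
      unfolding Dd_def
    proof (rule borel_measurable_sum)
      fix r assume "r \<in> ?S"
      then have [measurable]: "(\<lambda>i. \<mu> i r) \<in> borel_measurable M" using mu_meas by auto
      show "(\<lambda>i. if T i < t r then \<mu> i r * (t r - T i) else 0) \<in> borel_measurable M"
        by measurable
    qed
    show ?thesis unfolding \<alpha>_def aa_def by measurable
  qed
  have mRmeas: "(\<lambda>i. \<mu>R i r1 r2 r) \<in> borel_measurable M" for r1 r2 r
    unfolding \<mu>R_def mm_def by measurable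
  show ?thesis
  proof (rule exI[of _ \<alpha>], rule exI[of _ \<mu>R], intro conjI)
    show "\<forall>r1\<in>?S. \<forall>r2\<in>?S. (\<lambda>i. \<alpha> i r1 r2) \<in> borel_measurable M \<and>
        (\<forall>i\<in>space M. \<alpha> i r1 r2 \<in> {0..1}) \<and>
        (\<forall>r\<in>?S. (\<lambda>i. \<mu>R i r1 r2 r) \<in> borel_measurable M) \<and>
        (\<forall>i\<in>space M. \<mu>R i r1 r2 \<in> route_simplex R \<and>
                      card {r\<in>?S. \<mu>R i r1 r2 r > 0} \<le> 2)"
    proof (rule ballI)+
      fix r1 r2 assume r: "r1 \<in> ?S" "r2 \<in> ?S"
      show "(\<lambda>i. \<alpha> i r1 r2) \<in> borel_measurable M \<and>
        (\<forall>i\<in>space M. \<alpha> i r1 r2 \<in> {0..1}) \<and>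
        (\<forall>r\<in>?S. (\<lambda>i. \<mu>R i r1 r2 r) \<in> borel_measurable M) \<and>
        (\<forall>i\<in>space M. \<mu>R i r1 r2 \<in> route_simplex R \<and>
                      card {r\<in>?S. \<mu>R i r1 r2 r > 0} \<le> 2)"
      proof (intro conjI)
      show "(\<lambda>i. \<alpha> i r1 r2) \<in> borel_measurable M" using ameas[OF r] .
      show "\<forall>i\<in>space M. \<alpha> i r1 r2 \<in> {0..1}" using arng r by auto
      show "\<forall>r\<in>?S. (\<lambda>i. \<mu>R i r1 r2 r) \<in> borel_measurable M" using mRmeas by auto
      show "\<forall>i\<in>space M. \<mu>R i r1 r2 \<in> route_simplex R \<and> card {r\<in>?S. \<mu>R i r1 r2 r > 0} \<le> 2"
        unfolding \<mu>R_def route_simplex_def using mm_nonneg mm_sum[OF fin r] mm_card[OF fin] by auto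
      qed
    qed
  next
    show "\<forall>i\<in>space M. (\<Sum>r1=1..R. \<Sum>r2=1..R. \<alpha> i r1 r2) = 1" using asum by auto
  next
    show "AE i in M.
        (\<forall>r1\<in>{1..R}. \<forall>r2\<in>{1..R}. \<alpha> i r1 r2 > 0 \<longrightarrow>
             (\<Sum>r=1..R. t r * \<mu>R i r1 r2 r) = T i) \<and>
        (\<forall>r\<in>{1..R}. (\<Sum>r1=1..R. \<Sum>r2=1..R. \<alpha> i r1 r2 * \<mu>R i r1 r2 r) = \<mu> i r)"
      using ae
    proof (rule AE_mp, intro AE_I2 impI conjI ballI)
      fix i assume i: "i \<in> space M" and g0: "(\<Sum>r=1..R. \<mu> i r) = 1 \<and> (\<Sum>r=1..R. t r * \<mu> i r) = T i"
      then have g: "good i" unfolding good_def by auto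
      {
        fix r1 r2 assume r: "r1 \<in> ?S" "r2 \<in> ?S" and pos: "\<alpha> i r1 r2 > 0"
        then have "aa ?S (\<mu> i) t (T i) r1 r2 > 0" using g unfolding \<alpha>_def by simp
        then show "(\<Sum>r=1..R. t r * \<mu>R i r1 r2 r) = T i"
          using mm_time[OF fin r] unfolding \<mu>R_def by blast
      }
      {
        fix r assume r: "r \<in> ?S"
        show "(\<Sum>r1=1..R. \<Sum>r2=1..R. \<alpha> i r1 r2 * \<mu>R i r1 r2 r) = \<mu> i r"
        proof -
          have s1: "(\<Sum>r\<in>?S. \<mu> i r) = 1" and st: "(\<Sum>r\<in>?S. t r * \<mu> i r) = T i"
            using g0 by auto
          show ?thesis using recomb[OF fin nn[OF i] s1 st r] g unfolding \<alpha>_def \<mu>R_def by simp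
        qed
      }
    qed
  qed
qed

end
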